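(* For all $\mathfrak a\in I_K$ and all $b\in\mathbb N$ we have $R_b(\mathfrak a^2,1)\neq\emptyset$.
   Context: Let $K$ be a real quadratic number field with odd discriminant $D$, ring of integers $\mathcal O_K$, conjugation $x\mapsto x'$, norm $N(x)=xx'$. Let $I_K$ be the group of nonzero fractional ideals and $N(\mathfrak a)\in\mathbb Q_{>0}$ the absolute norm of $\mathfrak a\in I_K$ (multiplicative, with $N(x\mathcal O_K)=|N(x)|$). For $b\in\mathbb N$, $\mathfrak a\in I_K$, $m\in\mathbb Z$ let $R_b(\mathfrak a,m)=\{\lambda\in\mathfrak a/b\mathfrak a : N(\lambda)/N(\mathfrak a)\equiv m\pmod b\}$ (well defined since $N(\lambda)/N(\mathfrak a)\in\mathbb Z$ for $\lambda\in\mathfrak a$ and its class mod $b$ depends only on $\lambda$ mod $b\mathfrak a$). *)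

theory Defs
  imports Complex_Main "HOL-Computational_Algebra.Squarefree" "HOL-Library.Product_Plus" "HOL-Number_Theory.Cong"
begin

text \<open>The real quadratic field K = Q(sqrt d), d > 1 squarefree, is modelled as pairs
  (p, q) of rationals standing for p + q sqrt d.  Addition is componentwise
  (Product_Plus).\<close>

type_synonym qf = "rat \<times> rat"

definition qmul :: "int \<Rightarrow> qf \<Rightarrow> qf \<Rightarrow> qf" where
  "qmul d x y = (fst x * fst y + of_int d * snd x * snd y, fst x * snd y + snd x * fst y)"

definition qconj :: "qf \<Rightarrow> qf" where
  "qconj x = (fst x, - snd x)"

definition qnorm :: "int \<Rightarrow> qf \<Rightarrow> rat" where
  "qnorm d x = fst (qmul d x (qconj x))"

definition qscale :: "rat \<Rightarrow> qf \<Rightarrow> qf" where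
  "qscale c x = (c * fst x, c * snd x)"

text \<open>Ring of integers for d = 1 mod 4: Z[(1 + sqrt d)/2], i.e. x + y (1+sqrt d)/2.\<close>
definition OK :: "qf set" where
  "OK = {(of_int x + of_int y / 2, of_int y / 2) | x y :: int. True}"

definition frac_ideal :: "int \<Rightarrow> qf set \<Rightarrow> bool" where
  "frac_ideal d A \<longleftrightarrow>
     (0 \<in> A) \<and> (\<forall>x\<in>A. \<forall>y\<in>A. x + y \<in> A) \<and> (\<forall>x\<in>A. - x \<in> A) \<and>
     (\<forall>r\<in>OK. \<forall>x\<in>A. qmul d r x \<in> A) \<and>
     A \<noteq> {0} \<and> (\<exists>c::int. c \<noteq> 0 \<and> qscale (of_int c) ` A \<subseteq> OK)"

definition idmul :: "int \<Rightarrow> qf set \<Rightarrow> qf set \<Rightarrow> qf set" where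
  "idmul d A B = {z. \<exists>xs ys. length xs = length ys \<and> set xs \<subseteq> A \<and> set ys \<subseteq> B \<and>
                      z = sum_list (map2 (qmul d) xs ys)}"

definition lattice2 :: "qf \<Rightarrow> qf \<Rightarrow> qf set" where
  "lattice2 w1 w2 = {qscale (of_int m) w1 + qscale (of_int n) w2 | m n :: int. True}"

text \<open>Absolute norm of a fractional ideal = covolume of A divided by covolume of O_K,
  computed from a Z-basis (w1, w2) of A; O_K has Z-basis (1,0), (1/2,1/2) of
  determinant 1/2.\<close>
definition idnorm :: "qf set \<Rightarrow> rat" where
  "idnorm A = (THE r. \<exists>w1 w2. A = lattice2 w1 w2 \<and>
       r = 2 * \<bar>fst w1 * snd w2 - snd w1 * fst w2\<bar>)"

end

theory Submission
  imports Defs "HOL-Number_Theory.Cong"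
begin


definition E :: "rat \<Rightarrow> rat \<Rightarrow> qf" where "E s t = (s + t/2, t/2)"

lemma E_split: "x = E (fst x - snd x) (2 * snd x)"
  by (simp add: E_def prod_eq_iff)

lemma E_eq: "E s t = E s' t' \<longleftrightarrow> s = s' \<and> t = t'"
  by (auto simp: E_def)

lemma E_add: "E s t + E s' t' = E (s+s') (t+t')"
  by (simp add: E_def prod_eq_iff)

lemma E_zero: "E 0 0 = 0"
  by (simp add: E_def prod_eq_iff)

lemma qscale_E: "qscale c (E s t) = E (c*s) (c*t)"
  by (simp add: E_def qscale_def algebra_simps)

lemma qmul_E:
  assumes "d = 4*k0+1"
  shows "qmul d (E s t) (E s' t') = E (s*s' + of_int k0*t*t') (s*t'+t*s'+t*t')"
  using assms by (simp add: E_def qmul_def prod_eq_iff algebra_simps)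

lemma qnorm_E:
  assumes "d = 4*k0+1"
  shows "qnorm d (E s t) = s*s + s*t - of_int k0*t*t"
  using assms by (simp add: E_def qnorm_def qmul_def qconj_def algebra_simps)

lemma qnorm_mult: "qnorm d (qmul d x y) = qnorm d x * qnorm d y"
  by (simp add: qnorm_def qmul_def qconj_def algebra_simps)

lemma qnorm_scale: "qnorm d (qscale c x) = c*c*qnorm d x"
  by (simp add: qnorm_def qmul_def qconj_def qscale_def algebra_simps)

lemma qscale_add: "qscale c (x + y) = qscale c x + qscale c y"
  by (simp add: qscale_def prod_eq_iff algebra_simps)

lemma qscale_qscale: "qscale c (qscale c' x) = qscale (c*c') x"
  by (simp add: qscale_def)

lemma qscale_inv: "c \<noteq> 0 \<Longrightarrow> qscale c z = w \<Longrightarrow> z = qscale (1/c) w"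
  by (auto simp: qscale_def prod_eq_iff field_simps)

lemma qmul_qscale: "qmul d r (qscale c z) = qscale c (qmul d r z)"
  by (simp add: qmul_def qscale_def algebra_simps)

lemma qmul_int: "qmul d (E (of_int m) 0) z = qscale (of_int m) z"
  by (simp add: qmul_def qscale_def E_def)

lemma E_OK: "E (of_int x) (of_int y) \<in> OK"
  by (auto simp: OK_def E_def)

lemma OK_E: "z \<in> OK \<Longrightarrow> \<exists>x y. z = E (of_int x) (of_int y)"
  by (auto simp: OK_def E_def)

lemma nsq_aux:
  fixes u v d :: int
  assumes "squarefree d" "d > 1" "u*u = d*v*v" "v \<noteq> 0"
  shows False
proof -
  define g where "g = gcd u v"
  have g0: "g \<noteq> 0" using assms g_def by simp
  obtain u' v' where uv: "u = u'*g" "v = v'*g" "coprime u' v'"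
    using gcd_coprime_exists[OF g0[unfolded g_def]] g_def by blast
  have "g*g*(u'*u') = g*g*(d*v'*v')" using assms(3) uv by (simp add: algebra_simps)
  hence e: "u'*u' = d*v'*v'" using g0 by simp
  hence "v' dvd u'*u'" by simp
  moreover have "coprime v' (u'*u')" using uv(3) by (simp add: coprime_commute)
  ultimately have "is_unit v'" 
    using coprime_absorb_left by blast
  hence "\<bar>v'\<bar> = 1" by simp
  hence "v'*v' = 1" by (metis abs_mult_self_eq mult_1)
  hence "u'*u' = d" using e by simp
  hence "u'^2 dvd d" by (simp add: power2_eq_square)
  hence "is_unit u'" using assms(1) squarefree_def by blast
  hence "\<bar>u'\<bar> = 1" by simp
  hence "u'*u' = 1" by (metis abs_mult_self_eq mult_1)
  thus False using \<open>u'*u' = d\<close> assms(2) by simp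
qed

lemma nsq:
  fixes x y d k0 :: int
  assumes "squarefree d" "d > 1" "d = 4*k0+1" "(x,y) \<noteq> (0,0)"
  shows "x*x + x*y - k0*y*y \<noteq> 0"
proof
  assume h: "x*x + x*y - k0*y*y = 0"
  have "(2*x+y)*(2*x+y) = d*y*y" using h assms(3) by (simp add: algebra_simps)
  show False
  proof (cases "y = 0")
    case True thus False using h assms(4) by simp
  next
    case False thus False using nsq_aux[OF assms(1,2) \<open>(2*x+y)*(2*x+y) = d*y*y\<close>] by simp
  qed
qed

lemma struct_M:
  fixes M :: "(int\<times>int) set" and k0 :: int
  assumes add: "\<And>x y x' y'. (x,y)\<in>M \<Longrightarrow> (x',y')\<in>M \<Longrightarrow> (x+x', y+y') \<in> M"
    and scal: "\<And>x y m. (x,y)\<in>M \<Longrightarrow> (m*x, m*y)\<in>M"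
    and om: "\<And>x y. (x,y)\<in>M \<Longrightarrow> (k0*y, x+y) \<in> M"
    and nz: "(x0,y0)\<in>M" "(x0,y0)\<noteq>(0,0)"
    and nsq: "\<And>x y. (x,y) \<noteq> (0,0) \<Longrightarrow> x*x + x*y - k0*y*y \<noteq> 0"
  shows "\<exists>h a e. h>0 \<and> a>0 \<and> M = {(h*(m*a+n*e), h*n) | m n. True} \<and> a dvd (e*e+e-k0)"
proof -
  have sub: "(x - m*x', y - m*y') \<in> M" if "(x,y)\<in>M" "(x',y')\<in>M" for x y x' y' m
    using add[OF that(1) scal[OF that(2), of "-m"]] by simp
  have "\<exists>x y. (x,y)\<in>M \<and> y > 0"
  proof (cases "y0 = 0")
    case False
    have "(sgn y0 * x0, sgn y0 * y0) \<in> M" using scal nz(1) by blast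
    moreover have "sgn y0 * y0 > 0" using False by (metis abs_sgn mult.commute zero_less_abs_iff)
    ultimately show ?thesis by blast
  next
    case True
    hence "x0 \<noteq> 0" using nz by simp
    have "(0, x0) \<in> M" using om[OF nz(1)] True by simp
    hence "(sgn x0 * 0, sgn x0 * x0) \<in> M" using scal by blast
    moreover have "sgn x0 * x0 > 0" using \<open>x0\<noteq>0\<close> by (metis abs_sgn mult.commute zero_less_abs_iff)
    ultimately show ?thesis by blast
  qed
  then obtain y1 x1' where y1: "y1 > 0" "(x1',y1)\<in>M" by blast
  define hn where "hn = (LEAST n::nat. n > 0 \<and> (\<exists>x. (x, int n)\<in>M))"
  define h where "h = int hn"
  have "nat y1 > 0 \<and> (\<exists>x. (x, int (nat y1))\<in>M)" using y1 by auto
  hence "hn > 0 \<and> (\<exists>x. (x, int hn)\<in>M)" unfolding hn_def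
    by (rule LeastI[where P="\<lambda>n. n > 0 \<and> (\<exists>x. (x, int n)\<in>M)"])
  hence hP: "h > 0 \<and> (\<exists>x. (x,h)\<in>M)" unfolding h_def by simp
  have hmin: "h \<le> y" if "y > 0" "(x,y)\<in>M" for x y
  proof -
    have "nat y > 0 \<and> (\<exists>x. (x, int (nat y))\<in>M)" using that by auto
    hence "hn \<le> nat y" unfolding hn_def by (rule Least_le)
    thus ?thesis unfolding h_def using that by simp
  qed
  obtain s where s: "(s,h) \<in> M" using hP by blast
  have hdvd: "h dvd y" if "(x,y)\<in>M" for x y
  proof -
    have "(x - (y div h)*s, y - (y div h)*h) \<in> M" using sub[OF that s] .
    moreover have "y - (y div h)*h = y mod h" by (simp add: minus_div_mult_eq_mod)
    ultimately have m: "(x - (y div h)*s, y mod h) \<in> M" by simp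
    have "y mod h = 0"
    proof (rule ccontr)
      assume "y mod h \<noteq> 0"
      hence "y mod h > 0" using hP pos_mod_sign[of h y] by linarith
      hence "h \<le> y mod h" using m hmin by blast
      moreover have "y mod h < h" using hP by simp
      ultimately show False by simp
    qed
    thus ?thesis by (simp add: dvd_eq_mod_eq_0)
  qed
  obtain xn yn where xn: "(xn,yn)\<in>M" "(xn,yn)\<noteq>(0,0)" using nz by blast
  have "((xn+yn)*xn - yn*(k0*yn), (xn+yn)*yn - yn*(xn+yn)) \<in> M"
    using add[OF scal[OF xn(1), of "xn+yn"] scal[OF om[OF xn(1)], of "-yn"]] by simp
  hence nm: "(xn*xn + xn*yn - k0*yn*yn, 0) \<in> M" by (simp add: algebra_simps)
  have nn: "xn*xn + xn*yn - k0*yn*yn \<noteq> 0" using nsq xn(2) by blast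
  define N where "N = xn*xn + xn*yn - k0*yn*yn"
  have "(sgn N * N, sgn N * 0) \<in> M" using scal nm N_def by blast
  moreover have "sgn N * N > 0" using nn N_def by (metis abs_sgn mult.commute zero_less_abs_iff)
  ultimately have "\<exists>x. x > 0 \<and> (x,0)\<in>M" by auto
  then obtain x1 where x1: "x1 > 0 \<and> (x1,0)\<in>M" by blast
  define an where "an = (LEAST n::nat. n > 0 \<and> (int n,0)\<in>M)"
  define a0 where "a0 = int an"
  have "nat x1 > 0 \<and> (int (nat x1),0)\<in>M" using x1 by auto
  hence "an > 0 \<and> (int an,0)\<in>M" unfolding an_def
    by (rule LeastI[where P="\<lambda>n. n > 0 \<and> (int n,0)\<in>M"])
  hence a0P: "a0 > 0 \<and> (a0,0)\<in>M" unfolding a0_def by simp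
  have a0min: "a0 \<le> x" if "x > 0" "(x,0)\<in>M" for x
  proof -
    have "nat x > 0 \<and> (int (nat x),0)\<in>M" using that by auto
    hence "an \<le> nat x" unfolding an_def by (rule Least_le)
    thus ?thesis unfolding a0_def using that by simp
  qed
  have a0dvd: "a0 dvd x" if "(x,0)\<in>M" for x
  proof -
    have "(x - (x div a0)*a0, 0 - (x div a0)*0) \<in> M" using sub[OF that] a0P by blast
    moreover have "x - (x div a0)*a0 = x mod a0" by (simp add: minus_div_mult_eq_mod)
    ultimately have m: "(x mod a0, 0) \<in> M" by simp
    have "x mod a0 = 0"
    proof (rule ccontr)
      assume "x mod a0 \<noteq> 0"
      hence "x mod a0 > 0" using a0P pos_mod_sign[of a0 x] by linarith
      hence "a0 \<le> x mod a0" using m a0min by blast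
      moreover have "x mod a0 < a0" using a0P by simp
      ultimately show False by simp
    qed
    thus ?thesis by (simp add: dvd_eq_mod_eq_0)
  qed
  have "(0, a0) \<in> M" using om[of a0 0] a0P by simp
  hence "h dvd a0" using hdvd by blast
  then obtain a where a: "a0 = h*a" by blast
  have apos: "a > 0" using a a0P hP by (simp add: zero_less_mult_iff)
  have "(a*s - 1*0, a*h - 1*a0) \<in> M" using sub[OF scal[OF s, of a] \<open>(0,a0)\<in>M\<close>] .
  hence "(a*s, 0) \<in> M" using a by (simp add: algebra_simps)
  hence "h*a dvd a*s" using a0dvd a by blast
  hence "h dvd s" using apos by (simp add: mult.commute)
  then obtain e where e: "s = h*e" by blast
  have "(k0*h - (e+1)*s, (s+h) - (e+1)*h) \<in> M" using sub[OF om[OF s] s] .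
  hence "(h*(k0 - e*e - e), 0) \<in> M" using e by (simp add: algebra_simps)
  hence "h*a dvd h*(k0 - e*e - e)" using a0dvd a by blast
  hence "a dvd (k0 - e*e - e)" using hP by simp
  hence adv: "a dvd (e*e+e-k0)" by (metis dvd_minus_iff minus_diff_eq diff_diff_eq)
  have Meq: "M = {(h*(m*a+n*e), h*n) | m n. True}"
  proof (intro set_eqI iffI)
    fix p assume "p \<in> M"
    then obtain x y where xy: "(x,y)\<in>M" and p: "p = (x,y)" by (cases p) auto
    obtain n where n: "y = h*n" using hdvd[OF xy] by blast
    have "(x - n*s, y - n*h) \<in> M" using sub[OF xy s] .
    hence "(x - n*s, 0) \<in> M" using n by (simp add: mult.commute)
    hence "h*a dvd x - n*s" using a0dvd a by blast
    then obtain m where "x - n*s = h*a*m" by blast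
    hence "x = h*(m*a+n*e)" using e by (simp add: algebra_simps)
    thus "p \<in> {(h*(m*a+n*e), h*n) | m n. True}" using n p by blast
  next
    fix p assume "p \<in> {(h*(m*a+n*e), h*n) | m n. True}"
    then obtain m n where p: "p = (h*(m*a+n*e), h*n)" by blast
    have "(m*a0 + n*s, m*0 + n*h) \<in> M" using add[OF scal[of a0 0 m] scal[OF s, of n]] a0P by blast
    thus "p \<in> M" using a e p by (simp add: algebra_simps)
  qed
  show ?thesis using Meq hP apos adv by blast
qed



lemma struct_A:
  assumes sf: "squarefree d" and d1: "d > 1" and dk: "d = 4*k0+1" and fi: "frac_ideal d A"
  shows "\<exists>g a e. g \<noteq> 0 \<and> a > 0 \<and>
     A = {qscale g (E (of_int (m*a+n*e)) (of_int n)) | m n. True} \<and> a dvd (e*e+e-k0)"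
proof -
  from fi obtain c :: int where c: "c \<noteq> 0" "qscale (of_int c) ` A \<subseteq> OK"
    unfolding frac_ideal_def by blast
  have z0: "0 \<in> A" and zadd: "\<And>x y. x\<in>A \<Longrightarrow> y\<in>A \<Longrightarrow> x+y\<in>A"
    and zmul: "\<And>r x. r\<in>OK \<Longrightarrow> x\<in>A \<Longrightarrow> qmul d r x \<in> A" and znz: "A \<noteq> {0}"
    using fi unfolding frac_ideal_def by blast+
  define M where "M = {(x,y). \<exists>z\<in>A. qscale (of_int c) z = E (of_int x) (of_int y)}"
  have coords: "\<exists>x y. qscale (of_int c) z = E (of_int x) (of_int y)" if "z \<in> A" for z
    using c(2) that OK_E by blast
  have addM: "(x+x', y+y') \<in> M" if H: "(x,y)\<in>M" "(x',y')\<in>M" for x y x' y'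
  proof -
    obtain z z' where "z\<in>A" "z'\<in>A" "qscale (of_int c) z = E (of_int x) (of_int y)"
        "qscale (of_int c) z' = E (of_int x') (of_int y')" using H unfolding M_def by blast
    thus ?thesis unfolding M_def using zadd[of z z'] by (auto simp: qscale_add E_add intro!: bexI[of _ "z+z'"])
  qed
  have scalM: "(m*x, m*y) \<in> M" if H: "(x,y)\<in>M" for x y m
  proof -
    obtain z where z: "z\<in>A" "qscale (of_int c) z = E (of_int x) (of_int y)" using H unfolding M_def by blast
    have "qmul d (E (of_int m) 0) z \<in> A" using zmul[OF _ z(1)] E_OK[of m 0] by simp
    moreover have "qscale (of_int c) (qmul d (E (of_int m) 0) z) = E (of_int (m*x)) (of_int (m*y))"
    proof -
      have "qscale (of_int c) (qmul d (E (of_int m) 0) z) = qscale (of_int m) (qscale (of_int c) z)"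
        by (simp add: qmul_int qscale_qscale mult.commute)
      also have "\<dots> = E (of_int (m*x)) (of_int (m*y))" using z(2) by (simp add: qscale_E)
      finally show ?thesis .
    qed
    ultimately show ?thesis unfolding M_def by blast
  qed
  have omM: "(k0*y, x+y) \<in> M" if H: "(x,y)\<in>M" for x y
  proof -
    obtain z where z: "z\<in>A" "qscale (of_int c) z = E (of_int x) (of_int y)" using H unfolding M_def by blast
    have "qmul d (E 0 1) z \<in> A" using zmul[OF _ z(1)] E_OK[of 0 1] by simp
    moreover have "qscale (of_int c) (qmul d (E 0 1) z) = E (of_int (k0*y)) (of_int (x+y))"
      using z(2) by (simp add: qmul_qscale[symmetric] qmul_E[OF dk])
    ultimately show ?thesis unfolding M_def by blast
  qed
  obtain z1 where z1: "z1 \<in> A" "z1 \<noteq> 0" using znz z0 by blast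
  obtain x0 y0 where xy0: "qscale (of_int c) z1 = E (of_int x0) (of_int y0)" using coords[OF z1(1)] by blast
  have "(x0,y0) \<in> M" using z1 xy0 unfolding M_def by blast
  moreover have "(x0,y0) \<noteq> (0,0)"
  proof
    assume "(x0,y0) = (0,0)"
    hence "qscale (of_int c) z1 = 0" using xy0 E_zero by simp
    hence "z1 = 0" using c(1) by (simp add: qscale_def prod_eq_iff)
    thus False using z1 by simp
  qed
  ultimately obtain h a e where hae: "h>0" "a>0" "M = {(h*(m*a+n*e), h*n) | m n. True}" "a dvd (e*e+e-k0)"
    using struct_M[of M k0 x0 y0] addM scalM omM nsq[OF sf d1 dk] by blast
  define g :: rat where "g = of_int h / of_int c"
  have "A = {qscale g (E (of_int (m*a+n*e)) (of_int n)) | m n. True}"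
  proof (intro set_eqI iffI)
    fix z assume z: "z \<in> A"
    obtain x y where xy: "qscale (of_int c) z = E (of_int x) (of_int y)" using coords[OF z] by blast
    hence "(x,y) \<in> M" using z unfolding M_def by blast
    then obtain m n where mn: "x = h*(m*a+n*e)" "y = h*n" using hae(3) by blast
    have "z = qscale (1/of_int c) (E (of_int x) (of_int y))" using qscale_inv[OF _ xy] c(1) by simp
    also have "\<dots> = qscale g (E (of_int (m*a+n*e)) (of_int n))"
      unfolding mn g_def by (simp add: qscale_E)
    finally show "z \<in> {qscale g (E (of_int (m*a+n*e)) (of_int n)) | m n. True}" by blast
  next
    fix z assume "z \<in> {qscale g (E (of_int (m*a+n*e)) (of_int n)) | m n. True}"
    then obtain m n where z: "z = qscale g (E (of_int (m*a+n*e)) (of_int n))" by blast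
    have "(h*(m*a+n*e), h*n) \<in> M" using hae(3) by blast
    then obtain z' where z': "z'\<in>A" "qscale (of_int c) z' = E (of_int (h*(m*a+n*e))) (of_int (h*n))"
      unfolding M_def by blast
    have "z' = qscale (1/of_int c) (E (of_int (h*(m*a+n*e))) (of_int (h*n)))" using qscale_inv[OF _ z'(2)] c(1) by simp
    also have "\<dots> = z" unfolding z g_def by (simp add: qscale_E)
    finally show "z \<in> A" using z'(1) by simp
  qed
  moreover have "g \<noteq> 0" using hae(1) c(1) g_def by simp
  ultimately show ?thesis using hae by blast
qed




definition det2 :: "qf \<Rightarrow> qf \<Rightarrow> rat" where "det2 x y = fst x * snd y - snd x * fst y"

lemma det_comb: "det2 (qscale (of_int m1) w1 + qscale (of_int n1) w2) (qscale (of_int m2) w1 + qscale (of_int n2) w2)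
   = of_int (m1*n2 - n1*m2) * det2 w1 w2"
  by (simp add: det2_def qscale_def algebra_simps)

lemma lat_in: "qscale (of_int m) w1 + qscale (of_int n) w2 \<in> lattice2 w1 w2"
  by (auto simp: lattice2_def)

lemma lat_det: assumes "u1 \<in> lattice2 w1 w2" "u2 \<in> lattice2 w1 w2"
  shows "\<exists>k::int. det2 u1 u2 = of_int k * det2 w1 w2"
proof -
  obtain m1 n1 m2 n2 where "u1 = qscale (of_int m1) w1 + qscale (of_int n1) w2"
     "u2 = qscale (of_int m2) w1 + qscale (of_int n2) w2" using assms unfolding lattice2_def by blast
  thus ?thesis using det_comb by blast
qed

lemma self_in: "w1 \<in> lattice2 w1 w2" "w2 \<in> lattice2 w1 w2"
  using lat_in[of 1 w1 0 w2] lat_in[of 0 w1 1 w2] by (simp_all add: qscale_def zero_prod_def[symmetric])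

lemma det_unique: assumes "lattice2 w1 w2 = lattice2 u1 u2"
  shows "\<bar>det2 w1 w2\<bar> = \<bar>det2 u1 u2\<bar>"
proof -
  obtain k where k: "det2 u1 u2 = of_int k * det2 w1 w2" using lat_det[of u1 w1 w2 u2] self_in assms by metis
  obtain k' where k': "det2 w1 w2 = of_int k' * det2 u1 u2" using lat_det[of w1 u1 u2 w2] self_in assms by metis
  show ?thesis
  proof (cases "det2 w1 w2 = 0")
    case True thus ?thesis using k by simp
  next
    case False
    have "det2 w1 w2 = of_int (k'*k) * det2 w1 w2" using k k' by (simp add: mult.assoc)
    hence "of_int (k'*k) = (1::rat)" using False by simp
    hence "k'*k = 1" by (metis of_int_eq_1_iff)
    hence "k dvd 1" by (metis dvd_triv_right)
    hence "\<bar>k\<bar> = 1" by simp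
    hence "\<bar>(of_int k::rat)\<bar> = 1" by (metis of_int_abs of_int_1)
    thus ?thesis using k by (simp add: abs_mult)
  qed
qed

lemma idnorm_lattice2: "idnorm (lattice2 w1 w2) = 2*\<bar>det2 w1 w2\<bar>"
  unfolding idnorm_def
proof (rule the_equality)
  show "\<exists>u1 u2. lattice2 w1 w2 = lattice2 u1 u2 \<and> 2 * \<bar>det2 w1 w2\<bar> = 2 * \<bar>fst u1 * snd u2 - snd u1 * fst u2\<bar>"
    unfolding det2_def by blast
next
  fix r assume "\<exists>u1 u2. lattice2 w1 w2 = lattice2 u1 u2 \<and> r = 2 * \<bar>fst u1 * snd u2 - snd u1 * fst u2\<bar>"
  then obtain u1 u2 where "lattice2 w1 w2 = lattice2 u1 u2" "r = 2*\<bar>det2 u1 u2\<bar>" by (auto simp: det2_def)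
  thus "r = 2 * \<bar>det2 w1 w2\<bar>" using det_unique by metis
qed

lemma lat_add: "x \<in> lattice2 w1 w2 \<Longrightarrow> y \<in> lattice2 w1 w2 \<Longrightarrow> x + y \<in> lattice2 w1 w2"
proof -
  assume "x \<in> lattice2 w1 w2" "y \<in> lattice2 w1 w2"
  then obtain m n m' n' where "x = qscale (of_int m) w1 + qscale (of_int n) w2"
     "y = qscale (of_int m') w1 + qscale (of_int n') w2" unfolding lattice2_def by blast
  hence "x + y = qscale (of_int (m+m')) w1 + qscale (of_int (n+n')) w2"
    by (simp add: qscale_def prod_eq_iff algebra_simps)
  thus ?thesis using lat_in by metis
qed

lemma lat_zero: "0 \<in> lattice2 w1 w2"
  using lat_in[of 0 w1 0 w2] by (simp add: qscale_def zero_prod_def)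



lemma coprime_value:
  fixes a B c b :: int
  assumes prim: "\<And>x. x dvd a \<Longrightarrow> x dvd B \<Longrightarrow> x dvd c \<Longrightarrow> is_unit x" and b: "b \<noteq> 0"
  shows "\<exists>x y. coprime (a*x*x + B*x*y + c*y*y) b"
proof -
  define P where "P = prime_factors b"
  have fin: "finite P" unfolding P_def by simp
  define X where "X = (\<Prod>p\<in>{p\<in>P. p dvd a \<and> \<not> p dvd c}. p)"
  define Y where "Y = (\<Prod>p\<in>{p\<in>P. \<not> p dvd a}. p)"
  have PX: "prime p \<Longrightarrow> p dvd X \<longleftrightarrow> p \<in> P \<and> p dvd a \<and> \<not> p dvd c" for p
  proof -
    assume p: "prime p"
    have "p dvd X \<longleftrightarrow> (\<exists>q\<in>{p\<in>P. p dvd a \<and> \<not> p dvd c}. p dvd q)"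
      unfolding X_def using fin p by (intro prime_dvd_prod_iff) simp_all
    also have "\<dots> \<longleftrightarrow> p \<in> P \<and> p dvd a \<and> \<not> p dvd c"
    proof
      assume "\<exists>q\<in>{p\<in>P. p dvd a \<and> \<not> p dvd c}. p dvd q"
      then obtain q where q: "q \<in> P" "q dvd a" "\<not> q dvd c" "p dvd q" by blast
      have "prime q" using q(1) unfolding P_def by (simp add: in_prime_factors_iff)
      hence "p = q" by (rule primes_dvd_imp_eq[OF p _ q(4)])
      thus "p \<in> P \<and> p dvd a \<and> \<not> p dvd c" using q by simp
    next
      assume "p \<in> P \<and> p dvd a \<and> \<not> p dvd c"
      thus "\<exists>q\<in>{p\<in>P. p dvd a \<and> \<not> p dvd c}. p dvd q" by (intro bexI[of _ p]) auto
    qed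
    finally show ?thesis .
  qed
  have PY: "prime p \<Longrightarrow> p dvd Y \<longleftrightarrow> p \<in> P \<and> \<not> p dvd a" for p
  proof -
    assume p: "prime p"
    have "p dvd Y \<longleftrightarrow> (\<exists>q\<in>{p\<in>P. \<not> p dvd a}. p dvd q)"
      unfolding Y_def using fin p by (intro prime_dvd_prod_iff) simp_all
    also have "\<dots> \<longleftrightarrow> p \<in> P \<and> \<not> p dvd a"
    proof
      assume "\<exists>q\<in>{p\<in>P. \<not> p dvd a}. p dvd q"
      then obtain q where q: "q \<in> P" "\<not> q dvd a" "p dvd q" by blast
      have "prime q" using q(1) unfolding P_def by (simp add: in_prime_factors_iff)
      hence "p = q" by (rule primes_dvd_imp_eq[OF p _ q(3)])
      thus "p \<in> P \<and> \<not> p dvd a" using q by simp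
    next
      assume "p \<in> P \<and> \<not> p dvd a"
      thus "\<exists>q\<in>{p\<in>P. \<not> p dvd a}. p dvd q" by (intro bexI[of _ p]) auto
    qed
    finally show ?thesis .
  qed
  have "coprime (a*X*X + B*X*Y + c*Y*Y) b"
  proof (rule ccontr)
    assume "\<not> coprime (a*X*X + B*X*Y + c*Y*Y) b"
    then obtain q where q: "q dvd a*X*X + B*X*Y + c*Y*Y" "q dvd b" "\<not> is_unit q" by (rule not_coprimeE)
    have "q \<noteq> 0" using q(2) b by auto
    then obtain p where p: "p dvd q" "prime p" using prime_divisor_exists[OF _ q(3)] by blast
    have pQ: "p dvd a*X*X + B*X*Y + c*Y*Y" using p(1) q(1) dvd_trans by blast
    have "p dvd b" using p(1) q(2) by (rule dvd_trans)
    hence pP: "p \<in> P" unfolding P_def using p(2) b by (simp add: in_prime_factors_iff)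
    have pnu: "\<not> is_unit p" using p(2) not_prime_unit by blast
    show False
    proof (cases "p dvd a")
      case pa: True
      show ?thesis
      proof (cases "p dvd c")
        case pc: True
        have pB: "\<not> p dvd B" using prim pa pc pnu by blast
        have "\<not> p dvd X" using PX[OF p(2)] pc by simp
        have "\<not> p dvd Y" using PY[OF p(2)] pa by simp
        have "p dvd a*X*X + c*Y*Y" using pa pc by simp
        moreover have "a*X*X + B*X*Y + c*Y*Y = (a*X*X + c*Y*Y) + B*X*Y" by simp
        ultimately have "p dvd B*X*Y" using pQ dvd_add_right_iff by metis
        thus False using pB \<open>\<not> p dvd X\<close> \<open>\<not> p dvd Y\<close> p(2) by (simp add: prime_dvd_mult_iff)
      next
        case pc: False
        have "p dvd X" using PX[OF p(2)] pc pa pP by simp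
        have "\<not> p dvd Y" using PY[OF p(2)] pa by simp
        have "p dvd a*X*X + B*X*Y" using \<open>p dvd X\<close> by simp
        hence "p dvd c*Y*Y" using pQ dvd_add_right_iff by blast
        thus False using pc \<open>\<not> p dvd Y\<close> p(2) by (simp add: prime_dvd_mult_iff)
      qed
    next
      case pa: False
      have "\<not> p dvd X" using PX[OF p(2)] pa by simp
      have "p dvd Y" using PY[OF p(2)] pa pP by simp
      have "p dvd B*X*Y + c*Y*Y" using \<open>p dvd Y\<close> by simp
      moreover have "a*X*X + B*X*Y + c*Y*Y = a*X*X + (B*X*Y + c*Y*Y)" by simp
      ultimately have "p dvd a*X*X" using pQ dvd_add_left_iff by metis
      thus False using pa \<open>\<not> p dvd X\<close> p(2) by (simp add: prime_dvd_mult_iff)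
    qed
  qed
  thus ?thesis by blast
qed




lemma qmul_scale2: "qmul d (qscale g x) (qscale g' y) = qscale (g*g') (qmul d x y)"
  by (simp add: qmul_def qscale_def algebra_simps)

lemma map2_in_lat:
  assumes prodin: "\<And>x y. x \<in> A \<Longrightarrow> y \<in> A \<Longrightarrow> qmul d x y \<in> lattice2 w1 w2"
  shows "length xs = length ys \<Longrightarrow> set xs \<subseteq> A \<Longrightarrow> set ys \<subseteq> A \<Longrightarrow>
     sum_list (map2 (qmul d) xs ys) \<in> lattice2 w1 w2"
proof (induction xs arbitrary: ys)
  case Nil thus ?case by (simp add: lat_zero)
next
  case (Cons x xs)
  then obtain y ys' where ys: "ys = y # ys'" by (cases ys) auto
  have "qmul d x y \<in> lattice2 w1 w2" using prodin Cons.prems ys by simp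
  moreover have "sum_list (map2 (qmul d) xs ys') \<in> lattice2 w1 w2" using Cons ys by simp
  ultimately show ?case using ys lat_add by simp
qed

theorem lemma3p4:
  fixes d :: int and A :: "qf set" and b :: nat
  assumes "squarefree d" and "d > 1" and "d mod 4 = 1"
    and "frac_ideal d A"
    and "b > 0"
  shows "\<exists>l\<in>idmul d A A. \<exists>m::int.
           qnorm d l / idnorm (idmul d A A) = of_int m \<and> [m = 1] (mod int b)"
proof -
  define k0 where "k0 = d div 4"
  have dk: "d = 4*k0+1" using assms(3) unfolding k0_def by presburger
  obtain g a e where gae: "g \<noteq> 0" "a > 0"
     "A = {qscale g (E (of_int (m*a+n*e)) (of_int n)) | m n. True}" "a dvd (e*e+e-k0)"
    using struct_A[OF assms(1,2) dk assms(4)] by blast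
  define el where "el m n = qscale g (E (of_int (m*a+n*e)) (of_int n))" for m n
  have elA: "el m n \<in> A" for m n unfolding gae(3) el_def by blast
  have Ael: "\<exists>m n. z = el m n" if "z \<in> A" for z using that gae(3) unfolding el_def by blast
  define B where "B = 2*e+1"
  obtain c' where ac: "e*e+e-k0 = a*c'" using gae(4) by blast
  have disc: "B*B - 4*a*c' = d" using ac dk B_def by (simp add: algebra_simps)
  have prim: "is_unit x" if "x dvd a" "x dvd B" "x dvd c'" for x
  proof -
    have "x*x dvd B*B" using that(2) by (simp add: mult_dvd_mono)
    moreover have "x*x dvd 4*a*c'" using that(1,3) by (metis dvd_mult dvd_mult2 mult.assoc mult_dvd_mono)
    ultimately have "x*x dvd d" using disc by (metis dvd_diff)
    thus ?thesis using assms(1) unfolding squarefree_def by (simp add: power2_eq_square)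
  qed
  define h where "h = gcd a B"
  have hpos: "h > 0" using gae(2) h_def by simp
  obtain u v where uv: "u*a + v*B = h" using bezout_int[of a B] h_def by blast
  obtain a1 where a1: "a = h*a1" using h_def by (metis gcd_dvd1 dvdE)
  obtain B1 where B1: "B = h*B1" using h_def by (metis gcd_dvd2 dvdE)
  have "h*(u*a1+v*B1) = h*1" using uv a1 B1 by (simp add: algebra_simps)
  hence uv1: "u*a1+v*B1 = 1" using hpos by simp
  have "coprime h c'"
  proof (rule coprimeI)
    fix x assume "x dvd h" "x dvd c'"
    thus "is_unit x" using prim h_def by (meson dvd_trans gcd_dvd1 gcd_dvd2)
  qed
  then obtain p q where pq: "p*h + q*c' = 1" using bezout_int[of h c'] by (metis coprime_iff_gcd_eq_1)
  define r where "r = -v*a*c'"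
  define w1 where "w1 = qscale (g*g) (E (of_int (a*a1)) 0)"
  define w2 where "w2 = qscale (g*g) (E (of_int (r + h*e)) (of_int h))"
  define iC where "iC m1 n1 m2 n2 = m1*m2*h + (m1*n2+n1*m2)*v*c' - n1*n2*u*c'" for m1 n1 m2 n2 :: int
  define jC where "jC m1 n1 m2 n2 = (m1*n2+n1*m2)*a1 + n1*n2*B1" for m1 n1 m2 n2 :: int
  have prod: "qmul d (el m1 n1) (el m2 n2) = qscale (of_int (iC m1 n1 m2 n2)) w1 + qscale (of_int (jC m1 n1 m2 n2)) w2"
    for m1 n1 m2 n2
  proof -
    have I1: "iC m1 n1 m2 n2*(a*a1) + jC m1 n1 m2 n2*(r+h*e) = (m1*a+n1*e)*(m2*a+n2*e) + k0*n1*n2"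
    proof -
      have "iC m1 n1 m2 n2*(a*a1) + jC m1 n1 m2 n2*(r+h*e)
         = m1*m2*a*(h*a1) + (m1*n2+n1*m2)*(h*a1)*e + n1*n2*(-(a*c')*(u*a1+v*B1) + (h*B1)*e)"
        unfolding iC_def jC_def r_def by (simp add: algebra_simps)
      also have "\<dots> = m1*m2*a*a + (m1*n2+n1*m2)*a*e + n1*n2*(-(e*e+e-k0) + (2*e+1)*e)"
        using a1[symmetric] B1[symmetric] uv1 ac[symmetric] B_def by simp
      also have "\<dots> = (m1*a+n1*e)*(m2*a+n2*e) + k0*n1*n2" by (simp add: algebra_simps)
      finally show ?thesis .
    qed
    have I2: "jC m1 n1 m2 n2*h = (m1*a+n1*e)*n2 + n1*(m2*a+n2*e) + n1*n2"
    proof -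
      have "jC m1 n1 m2 n2*h = (m1*n2+n1*m2)*(h*a1) + n1*n2*(h*B1)"
        unfolding jC_def by (simp add: algebra_simps)
      also have "\<dots> = (m1*n2+n1*m2)*a + n1*n2*(2*e+1)"
        using a1[symmetric] B1[symmetric] B_def by simp
      also have "\<dots> = (m1*a+n1*e)*n2 + n1*(m2*a+n2*e) + n1*n2"
        by (simp add: algebra_simps)
      finally show ?thesis .
    qed
    have L: "qmul d (el m1 n1) (el m2 n2) = qscale (g*g) (E (of_int ((m1*a+n1*e)*(m2*a+n2*e) + k0*n1*n2))
          (of_int ((m1*a+n1*e)*n2 + n1*(m2*a+n2*e) + n1*n2)))"
      unfolding el_def qmul_scale2 qmul_E[OF dk] by simp
    have R: "qscale (of_int (iC m1 n1 m2 n2)) w1 + qscale (of_int (jC m1 n1 m2 n2)) w2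
       = qscale (g*g) (E (of_int (iC m1 n1 m2 n2*(a*a1) + jC m1 n1 m2 n2*(r+h*e))) (of_int (jC m1 n1 m2 n2*h)))"
      unfolding w1_def w2_def by (simp add: qscale_def E_def prod_eq_iff algebra_simps)
    show ?thesis unfolding L R I1 I2 ..
  qed
  have sub1: "idmul d A A \<subseteq> lattice2 w1 w2"
  proof
    fix z assume "z \<in> idmul d A A"
    then obtain xs ys where "length xs = length ys" "set xs \<subseteq> A" "set ys \<subseteq> A" "z = sum_list (map2 (qmul d) xs ys)"
      unfolding idmul_def by blast
    moreover have "qmul d x y \<in> lattice2 w1 w2" if "x \<in> A" "y \<in> A" for x y
      using Ael[OF that(1)] Ael[OF that(2)] prod lat_in by metis
    ultimately show "z \<in> lattice2 w1 w2" using map2_in_lat[of A d w1 w2 xs ys] by blast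
  qed
  have sub2: "lattice2 w1 w2 \<subseteq> idmul d A A"
  proof
    fix z assume "z \<in> lattice2 w1 w2"
    then obtain i j where z: "z = qscale (of_int i) w1 + qscale (of_int j) w2" unfolding lattice2_def by blast
    define Y where "Y = i*q*B1+j*u"
    define Z where "Z = j*v - i*q*a1"
    define xs where "xs = [el (i*p) 0, el Y 0, el 0 Z]"
    define ys where "ys = [el 1 0, el 0 1, el 0 1]"
    have "sum_list (map2 (qmul d) xs ys) = qmul d (el (i*p) 0) (el 1 0) + (qmul d (el Y 0) (el 0 1) + (qmul d (el 0 Z) (el 0 1) + 0))"
      unfolding xs_def ys_def by simp
    also have "\<dots> = qscale (of_int (iC (i*p) 0 1 0 + iC Y 0 0 1 + iC 0 Z 0 1)) w1
         + qscale (of_int (jC (i*p) 0 1 0 + jC Y 0 0 1 + jC 0 Z 0 1)) w2"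
      unfolding prod by (simp add: qscale_def prod_eq_iff algebra_simps)
    also have "iC (i*p) 0 1 0 + iC Y 0 0 1 + iC 0 Z 0 1 = i"
    proof -
      have "iC (i*p) 0 1 0 + iC Y 0 0 1 + iC 0 Z 0 1 = i*(p*h) + i*q*c'*(u*a1+v*B1)"
        unfolding iC_def Y_def Z_def by (simp add: algebra_simps)
      also have "\<dots> = i*(p*h+q*c')" using uv1 by (simp add: algebra_simps)
      finally show ?thesis using pq by simp
    qed
    also have "jC (i*p) 0 1 0 + jC Y 0 0 1 + jC 0 Z 0 1 = j"
    proof -
      have "jC (i*p) 0 1 0 + jC Y 0 0 1 + jC 0 Z 0 1 = j*(u*a1+v*B1)"
        unfolding jC_def Y_def Z_def by (simp add: algebra_simps)
      thus ?thesis using uv1 by simp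
    qed
    finally have "z = sum_list (map2 (qmul d) xs ys)" using z by simp
    moreover have "set xs \<subseteq> A" "set ys \<subseteq> A" "length xs = length ys" unfolding xs_def ys_def using elA by auto
    ultimately show "z \<in> idmul d A A" unfolding idmul_def by blast
  qed
  have AA: "idmul d A A = lattice2 w1 w2" using sub1 sub2 by blast
  have nrm: "idnorm (idmul d A A) = g*g*g*g*(of_int a*of_int a)"
  proof -
    have "det2 w1 w2 = g*g*g*g*(of_int a * of_int (h*a1))/2"
      unfolding w1_def w2_def det2_def by (simp add: qscale_def E_def algebra_simps)
    hence "det2 w1 w2 = g*g*g*g*(of_int a * of_int a)/2" using a1 by simp
    moreover have "g*g*g*g*(of_int a * of_int a) = (g*g*of_int a)*(g*g*of_int a)" by (simp add: algebra_simps)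
    hence "g*g*g*g*(of_int a * of_int a) \<ge> 0" by (metis zero_le_square)
    ultimately show ?thesis unfolding AA idnorm_lattice2 by simp
  qed
  define Q where "Q x y = a*x*x + B*x*y + c'*y*y" for x y :: int
  have normel: "qnorm d (el m n) = g*g*of_int (a * Q m n)" for m n
  proof -
    have "(m*a+n*e)*(m*a+n*e) + (m*a+n*e)*n - k0*n*n = a*a*m*m + a*m*n*(2*e+1) + n*n*(e*e+e-k0)"
      by (simp add: algebra_simps)
    also have "\<dots> = a * Q m n" unfolding Q_def B_def ac by (simp add: algebra_simps)
    finally have *: "(m*a+n*e)*(m*a+n*e) + (m*a+n*e)*n - k0*n*n = a * Q m n" .
    have "qnorm d (el m n) = g*g*of_int ((m*a+n*e)*(m*a+n*e) + (m*a+n*e)*n - k0*n*n)"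
      unfolding el_def qnorm_scale qnorm_E[OF dk] by simp
    thus ?thesis unfolding * .
  qed
  obtain x y where xy: "coprime (Q x y) (int b)"
    using coprime_value[of a B c' "int b"] prim assms(5) unfolding Q_def by auto
  obtain k where k: "[Q x y * k = 1] (mod int b)" using cong_solve_coprime_int[OF xy] by blast
  define l where "l = qmul d (el (k*x) (k*y)) (el x y)"
  have "l \<in> idmul d A A" unfolding idmul_def l_def
    by (rule CollectI, rule exI[of _ "[el (k*x) (k*y)]"], rule exI[of _ "[el x y]"]) (simp add: elA)
  moreover have "qnorm d l / idnorm (idmul d A A) = of_int ((Q x y * k)*(Q x y * k))"
  proof -
    have "Q (k*x) (k*y) = k*k*Q x y" unfolding Q_def by (simp add: algebra_simps)
    hence "qnorm d l = (g*g*g*g*(of_int a*of_int a)) * of_int ((Q x y * k)*(Q x y * k))"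
      unfolding l_def qnorm_mult normel by (simp add: algebra_simps)
    thus ?thesis unfolding nrm using gae(1,2) by simp
  qed
  moreover have "[(Q x y * k)*(Q x y * k) = 1] (mod int b)" using cong_mult[OF k k] by simp
  ultimately show ?thesis by blast
qed


end
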